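(* Let $A$ be a finite set, let $\overset{*}{<}=(\overset{x}{<},\overset{y}{<})$ be a regular double order on $A$ and let $\sigma\in\Sigma_A$. Then $\overset{*}{<}\bar\cup\,(\overset{*}{<}\sigma)$ is a double order if and only if $\sigma$ is the identity.
   Context: A strict partial order is a transitive irreflexive relation; it is semi-linear if it is induced by a surjection $h:A\to\{1,\dots,l\}$ (i.e. $a<b$ iff $h(a)<h(b)$). For strict partial orders $<_1,<_2$, $<_1\bar\cup<_2$ denotes the transitive closure of their union. A double order on $A$ is a pair $(\overset{x}{<},\overset{y}{<})$ of strict partial orders on $A$ such that for all $a\ne b$ at least one of $a\overset{x}{<}b$, $b\overset{x}{<}a$, $a\overset{y}{<}b$, $b\overset{y}{<}a$ holds. It is regular if $\overset{x}{<}$ is semi-linear and $a\overset{x}{<}b$ implies neither $a\overset{y}{<}b$ nor $b\overset{y}{<}a$. For double orders $\overset{*}{<}_1,\overset{*}{<}_2$, the union $\overset{*}{<}_1\bar\cup\overset{*}{<}_2=(\overset{x}{<}_1\bar\cup\overset{x}{<}_2,\overset{y}{<}_1\bar\cup\overset{y}{<}_2)$; it is a double order exactly when both components are irreflexive. $\Sigma_A$ acts on the right by $(\overset{x}{<},\overset{y}{<})\sigma=(\overset{x}{<}\sigma,\overset{y}{<}\sigma)$, where $a(\overset{x}{<}\sigma)b$ iff $\sigma(a)\overset{x}{<}\sigma(b)$, and similarly for $y$. *)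

theory Defs
  imports Main "HOL-Combinatorics.Permutations"
begin

definition strict_partial_order :: "'a set \<Rightarrow> 'a rel \<Rightarrow> bool" where
  "strict_partial_order A r \<longleftrightarrow> r \<subseteq> A \<times> A \<and> trans r \<and> irrefl r"

definition semi_linear :: "'a set \<Rightarrow> 'a rel \<Rightarrow> bool" where
  "semi_linear A r \<longleftrightarrow> r \<subseteq> A \<times> A \<and>
     (\<exists>(h::'a \<Rightarrow> nat) (l::nat). h ` A = {1..l} \<and>
        (\<forall>a\<in>A. \<forall>b\<in>A. (a, b) \<in> r \<longleftrightarrow> h a < h b))"

definition rel_union :: "'a rel \<Rightarrow> 'a rel \<Rightarrow> 'a rel" where
  "rel_union r1 r2 = (r1 \<union> r2)\<^sup>+"

definition double_order :: "'a set \<Rightarrow> 'a rel \<times> 'a rel \<Rightarrow> bool" where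
  "double_order A d \<longleftrightarrow> strict_partial_order A (fst d) \<and> strict_partial_order A (snd d) \<and>
     (\<forall>a\<in>A. \<forall>b\<in>A. a \<noteq> b \<longrightarrow>
        (a, b) \<in> fst d \<or> (b, a) \<in> fst d \<or> (a, b) \<in> snd d \<or> (b, a) \<in> snd d)"

definition regular_double_order :: "'a set \<Rightarrow> 'a rel \<times> 'a rel \<Rightarrow> bool" where
  "regular_double_order A d \<longleftrightarrow> double_order A d \<and> semi_linear A (fst d) \<and>
     (\<forall>a b. (a, b) \<in> fst d \<longrightarrow> (a, b) \<notin> snd d \<and> (b, a) \<notin> snd d)"

definition double_union :: "'a rel \<times> 'a rel \<Rightarrow> 'a rel \<times> 'a rel \<Rightarrow> 'a rel \<times> 'a rel" where
  "double_union d1 d2 = (rel_union (fst d1) (fst d2), rel_union (snd d1) (snd d2))"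

definition rel_act :: "'a set \<Rightarrow> 'a rel \<Rightarrow> ('a \<Rightarrow> 'a) \<Rightarrow> 'a rel" where
  "rel_act A r \<sigma> = {(a, b). a \<in> A \<and> b \<in> A \<and> (\<sigma> a, \<sigma> b) \<in> r}"

definition double_act :: "'a set \<Rightarrow> 'a rel \<times> 'a rel \<Rightarrow> ('a \<Rightarrow> 'a) \<Rightarrow> 'a rel \<times> 'a rel" where
  "double_act A d \<sigma> = (rel_act A (fst d) \<sigma>, rel_act A (snd d) \<sigma>)"

end

theory Submission
  imports Defs
begin

lemma cyc:
  assumes "irrefl ((R \<union> S)\<^sup>+)" "(a,b) \<in> R" "(b,a) \<in> S"
  shows False
proof -
  have "(a,a) \<in> (R \<union> S)\<^sup>+"
    using assms(2,3) by (meson UnI1 UnI2 trancl.r_into_trancl trancl_into_trancl)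
  then show False using assms(1) by (simp add: irrefl_def)
qed

theorem proposition4p5:
  fixes A :: "'a set" and d :: "'a rel \<times> 'a rel" and \<sigma> :: "'a \<Rightarrow> 'a"
  assumes "finite A"
    and "regular_double_order A d"
    and "\<sigma> permutes A"
  shows "double_order A (double_union d (double_act A d \<sigma>)) \<longleftrightarrow> \<sigma> = id"
proof -
  obtain X Y where d: "d = (X, Y)" by (cases d)
  have do: "double_order A (X,Y)" and sl: "semi_linear A X"
    and reg: "\<And>a b. (a,b) \<in> X \<Longrightarrow> (a,b) \<notin> Y \<and> (b,a) \<notin> Y"
    using assms(2) unfolding regular_double_order_def d by auto
  have XA: "X \<subseteq> A \<times> A" and Xt: "trans X" and Xi: "irrefl X"
   and YA: "Y \<subseteq> A \<times> A" and Yt: "trans Y" and Yi: "irrefl Y"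
   and tot: "\<And>a b. a \<in> A \<Longrightarrow> b \<in> A \<Longrightarrow> a \<noteq> b \<Longrightarrow> (a,b) \<in> X \<or> (b,a) \<in> X \<or> (a,b) \<in> Y \<or> (b,a) \<in> Y"
    using do unfolding double_order_def strict_partial_order_def by auto
  obtain h :: "'a \<Rightarrow> nat" where hX: "\<And>a b. a \<in> A \<Longrightarrow> b \<in> A \<Longrightarrow> (a,b) \<in> X \<longleftrightarrow> h a < h b"
  proof -
    from sl obtain h :: "'a \<Rightarrow> nat" and l :: nat where "\<forall>a\<in>A. \<forall>b\<in>A. (a, b) \<in> X \<longleftrightarrow> h a < h b"
      unfolding semi_linear_def by metis
    then show ?thesis using that by metis
  qed
  have sA: "\<And>a. a \<in> A \<Longrightarrow> \<sigma> a \<in> A" using assms(3) by (simp add: permutes_in_image)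
  have sout: "\<And>a. a \<notin> A \<Longrightarrow> \<sigma> a = a" using assms(3) by (simp add: permutes_not_in)
  have sinj: "inj \<sigma>" using assms(3) by (simp add: permutes_inj)
  have act: "rel_act A R id = R" if "R \<subseteq> A \<times> A" for R
    using that unfolding rel_act_def by auto
  show ?thesis
  proof
    assume "\<sigma> = id"
    then have e: "double_union d (double_act A d \<sigma>) = d"
      using XA YA Xt Yt unfolding double_union_def double_act_def rel_union_def d
      by (simp add: act)
    show "double_order A (double_union d (double_act A d \<sigma>))"
      using e assms(2) by (simp add: regular_double_order_def)
  next
    assume H: "double_order A (double_union d (double_act A d \<sigma>))"
    have iX: "irrefl ((X \<union> rel_act A X \<sigma>)\<^sup>+)" and iY: "irrefl ((Y \<union> rel_act A Y \<sigma>)\<^sup>+)"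
      using H unfolding double_order_def strict_partial_order_def double_union_def
        double_act_def rel_union_def d by auto
    have s1: "h (\<sigma> a) \<le> h (\<sigma> b)" if "a \<in> A" "b \<in> A" "h a < h b" for a b
    proof (rule ccontr)
      assume "\<not> ?thesis"
      then have "(b,a) \<in> rel_act A X \<sigma>" using that sA hX unfolding rel_act_def by auto
      moreover have "(a,b) \<in> X" using that hX by auto
      ultimately show False using cyc[OF iX] by blast
    qed
    have s2: "{a\<in>A. h a \<le> k} = {a\<in>A. h (\<sigma> a) \<le> k}" for k
    proof (rule ccontr)
      assume ne: "\<not> ?thesis"
      have im: "\<sigma> ` {a\<in>A. h (\<sigma> a) \<le> k} = {a\<in>A. h a \<le> k}"
      proof
        show "\<sigma> ` {a\<in>A. h (\<sigma> a) \<le> k} \<subseteq> {a\<in>A. h a \<le> k}" using sA by auto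
        show "{a\<in>A. h a \<le> k} \<subseteq> \<sigma> ` {a\<in>A. h (\<sigma> a) \<le> k}"
        proof
          fix x assume x: "x \<in> {a\<in>A. h a \<le> k}"
          then obtain y where "y \<in> A" "\<sigma> y = x"
            using assms(3) by (metis mem_Collect_eq permutes_inv_eq permutes_inv permutes_in_image)
          then show "x \<in> \<sigma> ` {a\<in>A. h (\<sigma> a) \<le> k}" using x by auto
        qed
      qed
      have cd: "card {a\<in>A. h (\<sigma> a) \<le> k} = card {a\<in>A. h a \<le> k}"
        using card_image[OF inj_on_subset[OF sinj subset_UNIV], of "{a\<in>A. h (\<sigma> a) \<le> k}"] im by simp
      have f: "finite {a\<in>A. h (\<sigma> a) \<le> k}" using assms(1) by simp
      have f2: "finite {a\<in>A. h a \<le> k}" using assms(1) by simp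
      have "\<not> {a\<in>A. h a \<le> k} \<subseteq> {a\<in>A. h (\<sigma> a) \<le> k}"
      proof
        assume "{a\<in>A. h a \<le> k} \<subseteq> {a\<in>A. h (\<sigma> a) \<le> k}"
        from card_subset_eq[OF f this] cd ne show False by simp
      qed
      then obtain a where a: "a \<in> A" "h a \<le> k" "\<not> h (\<sigma> a) \<le> k" by auto
      have "\<not> {a\<in>A. h (\<sigma> a) \<le> k} \<subseteq> {a\<in>A. h a \<le> k}"
      proof
        assume "{a\<in>A. h (\<sigma> a) \<le> k} \<subseteq> {a\<in>A. h a \<le> k}"
        from card_subset_eq[OF f2 this] cd ne show False by simp
      qed
      then obtain b where b: "b \<in> A" "h (\<sigma> b) \<le> k" "\<not> h b \<le> k" by auto
      show False using s1[OF a(1) b(1)] a b by auto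
    qed
    have s3: "h (\<sigma> a) = h a" if "a \<in> A" for a
    proof -
      have "h (\<sigma> a) \<le> h a" using s2[of "h a"] that by blast
      moreover have "h a \<le> h (\<sigma> a)" using s2[of "h (\<sigma> a)"] that by blast
      ultimately show ?thesis by simp
    qed
    have Ylev: "h a = h b" if "(a,b) \<in> Y" for a b
    proof -
      have "a \<in> A" "b \<in> A" using that YA by auto
      then show ?thesis using reg hX that by (metis linorder_neqE_nat)
    qed
    have s4: "(\<sigma> a, \<sigma> b) \<in> Y" if "(a,b) \<in> Y" for a b
    proof -
      have ab: "a \<in> A" "b \<in> A" "a \<noteq> b" using that YA Yi by (auto simp: irrefl_def)
      have "\<sigma> a \<noteq> \<sigma> b" using ab sinj by (meson injD)
      moreover have "h (\<sigma> a) = h (\<sigma> b)" using Ylev[OF that] s3 ab by simp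
      ultimately have "(\<sigma> a, \<sigma> b) \<in> Y \<or> (\<sigma> b, \<sigma> a) \<in> Y"
        using tot[of "\<sigma> a" "\<sigma> b"] sA ab hX by auto
      moreover have "(\<sigma> b, \<sigma> a) \<notin> Y"
      proof
        assume "(\<sigma> b, \<sigma> a) \<in> Y"
        then have "(b,a) \<in> rel_act A Y \<sigma>" using ab unfolding rel_act_def by auto
        then show False using cyc[OF iY that] by blast
      qed
      ultimately show ?thesis by blast
    qed
    have s4r: "(b, c) \<in> Y" if "(\<sigma> b, \<sigma> c) \<in> Y" "b \<in> A" "c \<in> A" for b c
    proof -
      have "b \<noteq> c" using that Yi by (auto simp: irrefl_def)
      moreover have "h b = h c" using Ylev[OF that(1)] s3 that by simp
      ultimately have "(b,c) \<in> Y \<or> (c,b) \<in> Y" using tot[of b c] that hX by auto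
      moreover have "(c,b) \<notin> Y"
      proof
        assume "(c,b) \<in> Y"
        then have "(\<sigma> c, \<sigma> b) \<in> Y" by (rule s4)
        then have "(\<sigma> b, \<sigma> b) \<in> Y" using that(1) Yt by (meson transD)
        then show False using Yi by (auto simp: irrefl_def)
      qed
      ultimately show ?thesis by blast
    qed
    define P where "P c = {b\<in>A. h b < h c \<or> (b,c) \<in> Y}" for c
    have Pim: "\<sigma> ` P c = P (\<sigma> c)" if "c \<in> A" for c
    proof
      show "\<sigma> ` P c \<subseteq> P (\<sigma> c)" using s3 s4 sA that unfolding P_def by auto
      show "P (\<sigma> c) \<subseteq> \<sigma> ` P c"
      proof
        fix x assume x: "x \<in> P (\<sigma> c)"
        then have "x \<in> A" unfolding P_def by auto
        then obtain y where y: "y \<in> A" "\<sigma> y = x"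
          using assms(3) by (metis permutes_inv_eq permutes_inv permutes_in_image)
        have "h y < h c \<or> (y,c) \<in> Y" using x y s3 s4r that unfolding P_def by auto
        then show "x \<in> \<sigma> ` P c" using y unfolding P_def by auto
      qed
    qed
    have Pc: "card (P (\<sigma> c)) = card (P c)" if "c \<in> A" for c
      using card_image[OF inj_on_subset[OF sinj subset_UNIV], of "P c"] Pim[OF that] by simp
    have Plt: "card (P c) < card (P c')" if "c \<in> A" "c' \<in> A" "h c < h c' \<or> (c,c') \<in> Y" for c c'
    proof -
      have "P c \<subseteq> P c'"
      proof
        fix b assume "b \<in> P c"
        then have b: "b \<in> A" "h b < h c \<or> (b,c) \<in> Y" unfolding P_def by auto
        have "h b < h c' \<or> (b,c') \<in> Y"
        proof (cases "h c < h c'")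
          case True
          then show ?thesis using b(2) Ylev[of b c] by auto
        next
          case False
          then have cc: "(c,c') \<in> Y" "h c = h c'" using that Ylev by auto
          show ?thesis
          proof (cases "h b < h c")
            case True then show ?thesis using cc by simp
          next
            case False
            then have "(b,c) \<in> Y" using b(2) by simp
            then show ?thesis using cc(1) Yt by (meson transD)
          qed
        qed
        then show "b \<in> P c'" using b(1) unfolding P_def by simp
      qed
      moreover have "c \<in> P c'" "c \<notin> P c" using that Yi unfolding P_def by (auto simp: irrefl_def)
      ultimately have "P c \<subset> P c'" by blast
      moreover have "finite (P c')" using assms(1) unfolding P_def by simp
      ultimately show ?thesis by (simp add: psubset_card_mono)
    qed
    have fix1: "\<sigma> c = c" if "c \<in> A" for c
    proof (rule ccontr)
      assume ne: "\<sigma> c \<noteq> c"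
      have "h c < h (\<sigma> c) \<or> h (\<sigma> c) < h c \<or> (c, \<sigma> c) \<in> Y \<or> (\<sigma> c, c) \<in> Y"
        using tot[OF that sA[OF that]] ne hX that sA by (metis linorder_neqE_nat)
      then show False using Plt[OF that sA[OF that]] Plt[OF sA[OF that] that] Pc[OF that] by linarith
    qed
    show "\<sigma> = id" using fix1 sout by (metis eq_id_iff)
  qed
qed

end
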